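(* Let $A$ be an evolution algebra with natural basis $B=\{e_i:i\in\Lambda\}$, and let $J$ be a non-zero ideal of $A$ with support $\Lambda_J$. Then $I_1=\mathrm{lin}\{e_i^2:i\in\Lambda_J\cup D(\Lambda_J)\}$ and $I_2=\mathrm{lin}\{e_i:i\in\Lambda_J\cup D(\Lambda_J)\}$ are ideals of $A$ and $I_1\subseteq J\subseteq I_2$. Moreover, if $\dim A<\infty$ and $\det M_B(A)\neq0$, then $I_1=J=I_2$.
   Context: An evolution algebra is an algebra $A$ over $\mathbb{K}\in\{\mathbb{R},\mathbb{C}\}$ with a basis $\{e_i:i\in\Lambda\}$ (natural basis) with $e_ie_j=0$ for $i\neq j$; write $e_i^2=\sum_k\omega_{ki}e_k$ and $M_B(A)=(\omega_{ki})$. Support: $\Lambda_a=\{i:\alpha_i\neq0\}$ for $a=\sum\alpha_ie_i$, $\Lambda_S=\bigcup_{a\in S}\Lambda_a$. Descendents: $D^1(i)=\{j:\omega_{ji}\neq0\}$, $D^n(i)=\bigcup_{j\in D^{n-1}(i)}D^1(j)$, $D(i)=\bigcup_{n\ge1}D^n(i)$, $D(\Lambda_0)=\bigcup_{i\in\Lambda_0}D(i)$. *)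

theory Defs
  imports "HOL-Combinatorics.Permutations" Complex_Main
begin

text \<open>Elements are finitely supported coefficient functions 'i => 'k;
  the structure constants are w k i (= omega_{ki}), i.e. e_i^2 = sum_k w k i e_k.\<close>

definition evo_struct :: "('i \<Rightarrow> 'i \<Rightarrow> 'k::zero) \<Rightarrow> bool" where
  "evo_struct w \<longleftrightarrow> (\<forall>i. finite {k. w k i \<noteq> 0})"

definition supp :: "('i \<Rightarrow> 'k::zero) \<Rightarrow> 'i set" where
  "supp a = {i. a i \<noteq> 0}"

definition EA :: "('i \<Rightarrow> 'k::zero) set" where
  "EA = {a. finite (supp a)}"

definition ebasis :: "'i \<Rightarrow> 'i \<Rightarrow> 'k::{zero,one}" where
  "ebasis i = (\<lambda>j. if j = i then 1 else 0)"

definition eadd :: "('i \<Rightarrow> 'k::plus) \<Rightarrow> ('i \<Rightarrow> 'k) \<Rightarrow> 'i \<Rightarrow> 'k" where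
  "eadd a b = (\<lambda>i. a i + b i)"

definition escale :: "'k::times \<Rightarrow> ('i \<Rightarrow> 'k) \<Rightarrow> 'i \<Rightarrow> 'k" where
  "escale c a = (\<lambda>i. c * a i)"

definition emult :: "('i \<Rightarrow> 'i \<Rightarrow> 'k::comm_ring_1) \<Rightarrow> ('i \<Rightarrow> 'k) \<Rightarrow> ('i \<Rightarrow> 'k) \<Rightarrow> 'i \<Rightarrow> 'k" where
  "emult w a b = (\<lambda>k. \<Sum>i\<in>supp a. a i * b i * w k i)"

definition esq :: "('i \<Rightarrow> 'i \<Rightarrow> 'k::comm_ring_1) \<Rightarrow> 'i \<Rightarrow> 'i \<Rightarrow> 'k" where
  "esq w i = emult w (ebasis i) (ebasis i)"

definition is_ideal :: "('i \<Rightarrow> 'i \<Rightarrow> 'k::comm_ring_1) \<Rightarrow> ('i \<Rightarrow> 'k) set \<Rightarrow> bool" where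
  "is_ideal w J \<longleftrightarrow> J \<subseteq> EA \<and> (\<lambda>_. 0) \<in> J
     \<and> (\<forall>a\<in>J. \<forall>b\<in>J. eadd a b \<in> J)
     \<and> (\<forall>c. \<forall>a\<in>J. escale c a \<in> J)
     \<and> (\<forall>a\<in>EA. \<forall>x\<in>J. emult w a x \<in> J \<and> emult w x a \<in> J)"

definition lin :: "('i \<Rightarrow> 'k::comm_ring_1) set \<Rightarrow> ('i \<Rightarrow> 'k) set" where
  "lin S = {a. \<exists>F c. finite F \<and> F \<subseteq> S \<and> a = (\<lambda>k. \<Sum>v\<in>F. c v * v k)}"

definition supp_set :: "('i \<Rightarrow> 'k::zero) set \<Rightarrow> 'i set" where
  "supp_set S = (\<Union>a\<in>S. supp a)"

definition D1 :: "('i \<Rightarrow> 'i \<Rightarrow> 'k::zero) \<Rightarrow> 'i \<Rightarrow> 'i set" where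
  "D1 w i = {j. w j i \<noteq> 0}"

text \<open>descn w n i is D^(n+1)(i).\<close>
fun descn :: "('i \<Rightarrow> 'i \<Rightarrow> 'k::zero) \<Rightarrow> nat \<Rightarrow> 'i \<Rightarrow> 'i set" where
  "descn w 0 i = D1 w i"
| "descn w (Suc n) i = (\<Union>j\<in>descn w n i. D1 w j)"

definition desc :: "('i \<Rightarrow> 'i \<Rightarrow> 'k::zero) \<Rightarrow> 'i \<Rightarrow> 'i set" where
  "desc w i = (\<Union>n. descn w n i)"

definition desc_set :: "('i \<Rightarrow> 'i \<Rightarrow> 'k::zero) \<Rightarrow> 'i set \<Rightarrow> 'i set" where
  "desc_set w L = (\<Union>i\<in>L. desc w i)"

text \<open>Determinant of the structure matrix M_B(A) = (w k i) (Leibniz formula);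
  meaningful when the index type is finite.\<close>
definition struct_det :: "('i \<Rightarrow> 'i \<Rightarrow> 'k::comm_ring_1) \<Rightarrow> 'k" where
  "struct_det w = (\<Sum>p\<in>{p. p permutes (UNIV::'i set)}.
      of_int (sign p) * (\<Prod>k\<in>(UNIV::'i set). w k (p k)))"

end

theory Submission
  imports Defs "Jordan_Normal_Form.Determinant"
begin


lemma lin_zero: "(\<lambda>_. 0) \<in> lin S"
  unfolding lin_def by (rule CollectI, rule exI[of _ "{}"]) auto

lemma lin_mem: "v \<in> S \<Longrightarrow> v \<in> lin S"
  unfolding lin_def by (rule CollectI, rule exI[of _ "{v}"], rule exI[of _ "\<lambda>_. 1"]) auto

lemma lin_scale: "a \<in> lin S \<Longrightarrow> escale s a \<in> lin S"
proof -
  assume "a \<in> lin S"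
  then obtain F c where F: "finite F" "F \<subseteq> S" "a = (\<lambda>k. \<Sum>v\<in>F. c v * v k)" unfolding lin_def by blast
  show ?thesis unfolding lin_def escale_def
    by (rule CollectI, rule exI[of _ F], rule exI[of _ "\<lambda>v. s * c v"])
       (auto simp: F sum_distrib_left mult.assoc)
qed

lemma lin_add: "a \<in> lin S \<Longrightarrow> b \<in> lin S \<Longrightarrow> eadd a b \<in> lin S"
proof -
  assume "a \<in> lin S" "b \<in> lin S"
  then obtain F1 c1 F2 c2 where F: "finite F1" "F1 \<subseteq> S" "a = (\<lambda>k. \<Sum>v\<in>F1. c1 v * v k)"
    "finite F2" "F2 \<subseteq> S" "b = (\<lambda>k. \<Sum>v\<in>F2. c2 v * v k)" unfolding lin_def by (auto simp only: mem_Collect_eq)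
  define c where "c v = (if v \<in> F1 then c1 v else 0) + (if v \<in> F2 then c2 v else 0)" for v
  have "(\<lambda>k. \<Sum>v\<in>F1 \<union> F2. c v * v k) = eadd a b"
  proof
    fix k
    have e: "c v * v k = (if v \<in> F1 then c1 v * v k else 0) + (if v \<in> F2 then c2 v * v k else 0)" for v
      unfolding c_def by (simp add: distrib_right)
    have "(\<Sum>v\<in>F1 \<union> F2. c v * v k) = (\<Sum>v\<in>F1 \<union> F2. (if v \<in> F1 then c1 v * v k else 0))
       + (\<Sum>v\<in>F1 \<union> F2. (if v \<in> F2 then c2 v * v k else 0))"
      unfolding e by (rule sum.distrib)
    also have "(\<Sum>v\<in>F1 \<union> F2. (if v \<in> F1 then c1 v * v k else 0)) = (\<Sum>v\<in>F1. c1 v * v k)"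
      using F by (subst sum.inter_restrict[symmetric]) (simp_all add: Int_absorb1)
    also have "(\<Sum>v\<in>F1 \<union> F2. (if v \<in> F2 then c2 v * v k else 0)) = (\<Sum>v\<in>F2. c2 v * v k)"
      using F by (subst sum.inter_restrict[symmetric]) (simp_all add: Int_absorb1)
    finally show "(\<Sum>v\<in>F1 \<union> F2. c v * v k) = eadd a b k" using F by (simp add: eadd_def)
  qed
  then show ?thesis unfolding lin_def
    by (intro CollectI exI[of _ "F1 \<union> F2"] exI[of _ c]) (use F in auto)
qed

lemma lin_closed:
  assumes "(\<lambda>_. 0) \<in> X" "\<forall>a\<in>X. \<forall>b\<in>X. eadd a b \<in> X" "\<forall>c. \<forall>a\<in>X. escale c a \<in> X" "S \<subseteq> X"
  shows "lin S \<subseteq> X"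
proof
  fix a assume "a \<in> lin S"
  then obtain F c where F: "finite F" "F \<subseteq> S" "a = (\<lambda>k. \<Sum>v\<in>F. c v * v k)" unfolding lin_def by blast
  have "F \<subseteq> S \<Longrightarrow> (\<lambda>k. \<Sum>v\<in>F. c v * v k) \<in> X" using F(1)
  proof (induction F rule: finite_induct)
    case empty then show ?case using assms(1) by simp
  next
    case (insert v F)
    have "(\<lambda>k. \<Sum>v\<in>insert v F. c v * v k) = eadd (escale (c v) v) (\<lambda>k. \<Sum>v\<in>F. c v * v k)"
      using insert by (simp add: eadd_def escale_def)
    then show ?case using insert assms by auto
  qed
  then show "a \<in> X" using F by simp
qed

lemma lin_sum:
  assumes "finite I" "\<forall>i\<in>I. g i \<in> S"
  shows "(\<lambda>k. \<Sum>i\<in>I. c i * g i k) \<in> lin S"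
  using assms
proof (induction I rule: finite_induct)
  case empty then show ?case using lin_zero by simp
next
  case (insert j I)
  have "(\<lambda>k. \<Sum>i\<in>insert j I. c i * g i k) = eadd (escale (c j) (g j)) (\<lambda>k. \<Sum>i\<in>I. c i * g i k)"
    using insert by (simp add: eadd_def escale_def)
  moreover have "g j \<in> lin S" by (rule lin_mem) (simp add: insert.prems)
  moreover have "(\<lambda>k. \<Sum>i\<in>I. c i * g i k) \<in> lin S" using insert by simp
  ultimately show ?case by (simp add: lin_add lin_scale)
qed

lemma supp_ebasis: "supp (ebasis i :: 'i \<Rightarrow> 'k::comm_ring_1) = {i}"
  by (auto simp: supp_def ebasis_def)

lemma emult_ebasis: "emult w (ebasis i) a = (\<lambda>k. a i * w k i)"
  unfolding emult_def supp_ebasis by (simp add: ebasis_def)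

lemma esq_eq: "esq w i = (\<lambda>k. w k i)"
  unfolding esq_def emult_ebasis by (simp add: ebasis_def)

lemma emult_alt: "finite (supp a) \<Longrightarrow> emult w a b = (\<lambda>k. \<Sum>i\<in>supp a \<inter> supp b. a i * b i * w k i)"
  unfolding emult_def
  by (rule ext, rule sum.mono_neutral_right) (auto simp: supp_def)

lemma emult_comm: "finite (supp a) \<Longrightarrow> finite (supp b) \<Longrightarrow> emult w a b = emult w b a"
  by (simp add: emult_alt Int_commute mult.commute mult.left_commute)



lemma perm_of_bij:
  assumes "finite (UNIV::'i set)" "bij (p::'i\<Rightarrow>'i)"
  shows "permutation p"
  using assms by (simp add: permutation_permutes) (metis bij_imp_permutes bij_betw_def UNIV_I)

lemma conj_bij:
  fixes f :: "nat \<Rightarrow> 'i"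
  assumes f: "bij_betw f {0..<n} UNIV" and q: "q permutes {0..<n}"
  shows "bij (f \<circ> q \<circ> inv_into {0..<n} f)"
proof -
  have "bij_betw (inv_into {0..<n} f) UNIV {0..<n}" using f by (rule bij_betw_inv_into)
  moreover have "bij_betw q {0..<n} {0..<n}" using q by (rule permutes_imp_bij)
  ultimately show ?thesis using f unfolding comp_assoc
    by (metis bij_betw_trans)
qed

lemma sign_conj:
  fixes f :: "nat \<Rightarrow> 'i"
  assumes fin: "finite (UNIV::'i set)" and f: "bij_betw f {0..<n} UNIV" and q: "q permutes {0..<n}"
  shows "sign (f \<circ> q \<circ> inv_into {0..<n} f) = sign q"
  using q finite_atLeastLessThan
proof (induction q rule: permutes_induct)
  case id
  have "f \<circ> id \<circ> inv_into {0..<n} f = id"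
    using f by (auto simp: bij_betw_inv_into_right)
  then show ?case by simp
next
  case (swap a b p)
  let ?g = "inv_into {0..<n} f"
  have inj: "inj_on f {0..<n}" using f bij_betw_def by blast
  have eq: "f \<circ> (Transposition.transpose a b \<circ> p) \<circ> ?g
      = Transposition.transpose (f a) (f b) \<circ> (f \<circ> p \<circ> ?g)"
  proof
    fix x
    have gx: "?g x \<in> {0..<n}" using f by (metis UNIV_I bij_betw_def inv_into_into)
    then have y: "p (?g x) \<in> {0..<n}" using swap.hyps(4) by (simp add: permutes_in_image)
    show "(f \<circ> (Transposition.transpose a b \<circ> p) \<circ> ?g) x
      = (Transposition.transpose (f a) (f b) \<circ> (f \<circ> p \<circ> ?g)) x"
      using y swap.hyps(1,2) inj by (auto simp: Transposition.transpose_def inj_on_eq_iff)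
  qed
  have fab: "f a \<noteq> f b" using inj swap.hyps(1,2,3) by (auto simp: inj_on_eq_iff)
  have "sign (f \<circ> (Transposition.transpose a b \<circ> p) \<circ> ?g)
      = sign (Transposition.transpose (f a) (f b)) * sign (f \<circ> p \<circ> ?g)"
    unfolding eq
    by (rule sign_compose) (auto intro!: perm_of_bij[OF fin] conj_bij[OF f swap.hyps(4)] bij_swap_iff simp: )
  also have "\<dots> = - sign p" using fab swap.IH by (simp add: sign_swap_id comp_def)
  also have "\<dots> = sign (Transposition.transpose a b \<circ> p)"
    using swap.hyps permutes_imp_permutation[OF finite_atLeastLessThan swap.hyps(4)]
    by (simp add: sign_compose sign_swap_id permutation_swap_id)
  finally show ?case .
qed

lemma det_conv:
  fixes w :: "'i \<Rightarrow> 'i \<Rightarrow> 'k::comm_ring_1"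
  assumes fin: "finite (UNIV::'i set)" and f: "bij_betw f {0..<n} UNIV"
  shows "det (mat n n (\<lambda>(r,c). w (f r) (f c))) = struct_det w"
proof -
  let ?g = "inv_into {0..<n} f"
  let ?A = "mat n n (\<lambda>(r,c). w (f r) (f c))"
  have inj: "inj_on f {0..<n}" using f bij_betw_def by blast
  have gx: "?g x \<in> {0..<n}" for x using f by (metis UNIV_I bij_betw_def inv_into_into)
  have fg: "f (?g x) = x" for x using f by (simp add: bij_betw_inv_into_right)
  have gf: "x \<in> {0..<n} \<Longrightarrow> ?g (f x) = x" for x using inj by simp
  have "det ?A = (\<Sum>q\<in>{q. q permutes {0..<n}}. of_int (sign q) * (\<Prod>i=0..<n. ?A $$ (i, q i)))"
    by (rule det_def') simp
  also have "\<dots> = (\<Sum>p\<in>{p. p permutes (UNIV::'i set)}. of_int (sign p) * (\<Prod>k\<in>UNIV. w k (p k)))"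
  proof (rule sum.reindex_bij_witness[where j = "\<lambda>q. f \<circ> q \<circ> ?g"
        and i = "\<lambda>p x. if x \<in> {0..<n} then ?g (p (f x)) else x"])
    fix q assume "q \<in> {q. q permutes {0..<n}}"
    then have q: "q permutes {0..<n}" by simp
    show "(\<lambda>x. if x \<in> {0..<n} then ?g ((f \<circ> q \<circ> ?g) (f x)) else x) = q"
    proof
      fix x show "(if x \<in> {0..<n} then ?g ((f \<circ> q \<circ> ?g) (f x)) else x) = q x"
        using q gf permutes_in_image[OF q] permutes_not_in[OF q] by auto
    qed
    show "f \<circ> q \<circ> ?g \<in> {p. p permutes UNIV}"
      using conj_bij[OF f q] by (auto intro: bij_imp_permutes)
    have "(\<Prod>k\<in>UNIV. w k ((f \<circ> q \<circ> ?g) k)) = (\<Prod>r\<in>{0..<n}. w (f r) ((f \<circ> q \<circ> ?g) (f r)))"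
      using prod.reindex_bij_betw[OF f, of "\<lambda>k. w k ((f \<circ> q \<circ> ?g) k)"] by simp
    also have "\<dots> = (\<Prod>i=0..<n. ?A $$ (i, q i))"
      by (rule prod.cong) (use gf permutes_in_image[OF q] in auto)
    finally show "of_int (sign (f \<circ> q \<circ> ?g)) * (\<Prod>k\<in>UNIV. w k ((f \<circ> q \<circ> ?g) k))
       = of_int (sign q) * (\<Prod>i=0..<n. ?A $$ (i, q i))"
      using sign_conj[OF fin f q] by simp
  next
    fix p :: "'i \<Rightarrow> 'i" assume "p \<in> {p. p permutes UNIV}"
    then have p: "p permutes UNIV" by simp
    show "f \<circ> (\<lambda>x. if x \<in> {0..<n} then ?g (p (f x)) else x) \<circ> ?g = p"
      using gx by (intro ext) (simp add: fg)
    have "bij_betw (?g \<circ> p \<circ> f) {0..<n} {0..<n}"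
      using f p by (metis bij_betw_inv_into bij_betw_trans permutes_imp_bij)
    then have "bij_betw (\<lambda>x. if x \<in> {0..<n} then ?g (p (f x)) else x) {0..<n} {0..<n}"
      by (rule bij_betw_cong[THEN iffD1, rotated]) simp
    then show "(\<lambda>x. if x \<in> {0..<n} then ?g (p (f x)) else x) \<in> {q. q permutes {0..<n}}"
      by (auto intro!: bij_imp_permutes)
  qed
  also have "\<dots> = struct_det w" unfolding struct_det_def ..
  finally show ?thesis .
qed



lemma key:
  fixes w :: "'i \<Rightarrow> 'i \<Rightarrow> 'k::field"
  assumes fin: "finite (UNIV::'i set)" and dn: "struct_det w \<noteq> 0"
    and clos: "\<forall>i\<in>S. D1 w i \<subseteq> S" and jS: "j \<in> S"
  shows "\<exists>c. ebasis j = (\<lambda>k. \<Sum>i\<in>S. c i * w k i)"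
proof -
  define n where "n = card (UNIV::'i set)"
  define m where "m = card S"
  have finS: "finite S" using fin by (rule finite_subset[rotated]) simp
  have mn: "m \<le> n" unfolding m_def n_def using fin by (simp add: card_mono)
  obtain f0 where f0: "bij_betw f0 {0..<m} S" using ex_bij_betw_nat_finite[OF finS] m_def by blast
  have cC: "card (- S) = n - m" unfolding n_def m_def using fin finS
    by (simp add: Compl_eq_Diff_UNIV card_Diff_subset)
  obtain f1 where f1: "bij_betw f1 {0..<n-m} (- S)"
    proof -
    have "finite (- S)" using fin by (rule finite_subset[rotated]) simp
    then show ?thesis using ex_bij_betw_nat_finite[of "- S"] cC that by auto
  qed
  define f where "f r = (if r < m then f0 r else f1 (r - m))" for r
  have bf0: "bij_betw f {0..<m} S" using f0 by (rule bij_betw_cong[THEN iffD1, rotated]) (simp add: f_def)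
  have sh: "bij_betw (\<lambda>r. r - m) {m..<n} {0..<n-m}"
    by (rule bij_betw_byWitness[where f' = "\<lambda>r. r + m"]) auto
  have bf1: "bij_betw f {m..<n} (- S)"
  proof -
    have "bij_betw (f1 \<circ> (\<lambda>r. r - m)) {m..<n} (- S)" using bij_betw_trans[OF sh f1] .
    then show ?thesis by (rule bij_betw_cong[THEN iffD1, rotated]) (simp add: f_def)
  qed
  have f: "bij_betw f {0..<n} UNIV"
    using bij_betw_combine[OF bf0 bf1] mn by (simp add: ivl_disj_un_two(3))
  define A where "A = mat n n (\<lambda>(r,c). w (f r) (f c))"
  define A1 where "A1 = mat m m (\<lambda>(r,c). w (f r) (f c))"
  define A2 where "A2 = mat m (n-m) (\<lambda>(r,c). w (f r) (f (c + m)))"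
  define A4 where "A4 = mat (n-m) (n-m) (\<lambda>(r,c). w (f (r + m)) (f (c + m)))"
  have zero: "w k i = 0" if "i \<in> S" "k \<notin> S" for i k
    using clos that unfolding D1_def by blast
  have "A = four_block_mat A1 A2 (0\<^sub>m (n-m) m) A4"
  proof (rule eq_matI)
    fix r c assume rc: "r < dim_row (four_block_mat A1 A2 (0\<^sub>m (n-m) m) A4)"
      "c < dim_col (four_block_mat A1 A2 (0\<^sub>m (n-m) m) A4)"
    then have rc': "r < n" "c < n" using mn by (simp_all add: A1_def A4_def)
    show "A $$ (r, c) = four_block_mat A1 A2 (0\<^sub>m (n-m) m) A4 $$ (r, c)"
    proof (cases "r < m \<or> c \<ge> m")
      case True
      then show ?thesis using rc rc' mn by (auto simp: A_def A1_def A2_def A4_def)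
    next
      case False
      have "f c \<in> S" using bij_betw_apply[OF bf0, of c] False by simp
      moreover have "f r \<in> - S" using bij_betw_apply[OF bf1, of r] False rc' by simp
      ultimately have "f c \<in> S" "f r \<notin> S" by auto
      then show ?thesis using rc rc' mn False by (auto simp: A_def A1_def A2_def A4_def zero)
    qed
  qed (use mn in \<open>simp_all add: A_def A1_def A4_def\<close>)
  moreover have "A1 \<in> carrier_mat m m" "A2 \<in> carrier_mat m (n-m)" "A4 \<in> carrier_mat (n-m) (n-m)"
    by (simp_all add: A1_def A2_def A4_def)
  ultimately have "det A = det A1 * det A4"
    using det_four_block_mat_lower_left_zero[of A1 m A2 "n-m" "0\<^sub>m (n-m) m" A4] by simp
  moreover have "det A = struct_det w" unfolding A_def by (rule det_conv[OF fin f])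
  ultimately have d: "det A1 \<noteq> 0" using dn by auto
  have A1c: "A1 \<in> carrier_mat m m" by (simp add: A1_def)
  note adj = adj_mat[OF A1c]
  define g0 where "g0 = inv_into {0..<m} f0"
  define j0 where "j0 = g0 j"
  have j0: "j0 < m" "f0 j0 = j" using f0 jS unfolding j0_def g0_def
    by (auto simp: bij_betw_inv_into_right intro: bij_betw_apply[OF bij_betw_inv_into[OF f0], simplified])
  define c where "c i = adj_mat A1 $$ (g0 i, j0) / det A1" for i
  have solve: "(\<Sum>c'\<in>{0..<m}. A1 $$ (r, c') * adj_mat A1 $$ (c', j0)) = (if r = j0 then det A1 else 0)"
    if "r < m" for r
  proof -
    have "(A1 * adj_mat A1) $$ (r, j0) = (\<Sum>c'\<in>{0..<m}. A1 $$ (r, c') * adj_mat A1 $$ (c', j0))"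
      using that j0 adj(1) A1c by (simp add: scalar_prod_def)
    then show ?thesis using adj(2) that j0 by (simp split: if_splits)
  qed
  show ?thesis
  proof (intro exI ext)
    fix k
    show "ebasis j k = (\<Sum>i\<in>S. c i * w k i)"
    proof (cases "k \<in> S")
      case False
      then show ?thesis using jS zero by (auto simp: ebasis_def)
    next
      case True
      define r where "r = g0 k"
      have r: "r < m" "f0 r = k" using f0 True unfolding r_def g0_def
        by (auto simp: bij_betw_inv_into_right intro: bij_betw_apply[OF bij_betw_inv_into[OF f0], simplified])
      have "(\<Sum>i\<in>S. c i * w k i) = (\<Sum>c'\<in>{0..<m}. c (f0 c') * w k (f0 c'))"
        using sum.reindex_bij_betw[OF f0, of "\<lambda>i. c i * w k i"] by simp
      also have "\<dots> = (\<Sum>c'\<in>{0..<m}. A1 $$ (r, c') * adj_mat A1 $$ (c', j0)) / det A1"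
        unfolding sum_divide_distrib
      proof (rule sum.cong)
        fix c' assume c': "c' \<in> {0..<m}"
        have "g0 (f0 c') = c'" unfolding g0_def using f0 c' by (simp add: bij_betw_inv_into_left)
        then show "c (f0 c') * w k (f0 c') = A1 $$ (r, c') * adj_mat A1 $$ (c', j0) / det A1"
          using c' r by (simp add: c_def A1_def f_def)
      qed simp
      also have "\<dots> = (if r = j0 then 1 else 0)" using solve[OF r(1)] d by simp
      also have "\<dots> = ebasis j k"
        using r j0 f0 by (auto simp: ebasis_def bij_betw_def inj_on_eq_iff)
      finally show ?thesis by simp
    qed
  qed
qed


theorem proposition5p6:
  fixes w :: "'i \<Rightarrow> 'i \<Rightarrow> 'k::real_normed_field"
    and J :: "('i \<Rightarrow> 'k) set"
  assumes "evo_struct w"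
    and "is_ideal w J"
    and "\<exists>a\<in>J. a \<noteq> (\<lambda>_. 0)"
  defines "L \<equiv> supp_set J \<union> desc_set w (supp_set J)"
  defines "I1 \<equiv> lin {esq w i | i. i \<in> L}"
  defines "I2 \<equiv> lin {ebasis i | i. i \<in> L}"
  shows "is_ideal w I1 \<and> is_ideal w I2 \<and> I1 \<subseteq> J \<and> J \<subseteq> I2
         \<and> ((finite (UNIV::'i set) \<and> struct_det w \<noteq> 0) \<longrightarrow> I1 = J \<and> J = I2)"
proof -
  define S where "S = supp_set J"
  have idJ: "J \<subseteq> EA" "(\<lambda>_. 0) \<in> J" "\<forall>a\<in>J. \<forall>b\<in>J. eadd a b \<in> J"
     "\<forall>c. \<forall>a\<in>J. escale c a \<in> J" "\<forall>a\<in>EA. \<forall>x\<in>J. emult w a x \<in> J \<and> emult w x a \<in> J"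
    using assms(2) unfolding is_ideal_def by auto
  have fin: "finite (D1 w i)" for i using assms(1) unfolding evo_struct_def D1_def by auto
  have esqJ: "esq w i \<in> J" if iS: "i \<in> S" for i
  proof -
    obtain a where a: "a \<in> J" "a i \<noteq> 0" using iS[unfolded S_def supp_set_def supp_def] by auto
    have "(ebasis i :: 'i \<Rightarrow> 'k) \<in> EA" by (simp add: EA_def supp_ebasis)
    then have "emult w (ebasis i) a \<in> J" using idJ a by blast
    then have "escale (inverse (a i)) (emult w (ebasis i) a) \<in> J" using idJ by blast
    moreover have "escale (inverse (a i)) (emult w (ebasis i) a) = esq w i"
      using a by (simp add: escale_def emult_ebasis esq_eq mult.assoc[symmetric])
    ultimately show ?thesis by simp
  qed
  have suppesq: "supp (esq w i) = D1 w i" for i by (simp add: esq_eq supp_def D1_def)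
  have clos: "D1 w i \<subseteq> S" if "i \<in> S" for i
    using esqJ[OF that] suppesq unfolding S_def supp_set_def by blast
  have descS: "descn w n i \<subseteq> S" if "i \<in> S" for n i
    by (induction n) (use clos that in auto)
  have LS: "L = S" unfolding L_def S_def[symmetric] desc_set_def desc_def using descS by auto
  define V where "V = {x::'i\<Rightarrow>'k. finite (supp x) \<and> supp x \<subseteq> S}"
  have V0: "(\<lambda>_. 0) \<in> V" by (simp add: V_def supp_def)
  have Vadd: "\<forall>a\<in>V. \<forall>b\<in>V. eadd a b \<in> V"
  proof (intro ballI)
    fix a b assume "a \<in> V" "b \<in> V"
    moreover have "supp (eadd a b) \<subseteq> supp a \<union> supp b" by (auto simp: supp_def eadd_def)
    ultimately show "eadd a b \<in> V" unfolding V_def by (auto dest: finite_subset)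
  qed
  have Vscale: "\<forall>c. \<forall>a\<in>V. escale c a \<in> V"
  proof (intro allI ballI)
    fix c a assume "a \<in> V"
    moreover have "supp (escale c a) \<subseteq> supp a" by (auto simp: supp_def escale_def)
    ultimately show "escale c a \<in> V" unfolding V_def by (auto dest: finite_subset)
  qed
  have I1V: "I1 \<subseteq> V" unfolding I1_def LS
    by (rule lin_closed[OF V0 Vadd Vscale]) (use clos in \<open>auto simp: V_def suppesq fin; blast\<close>)
  have I2V: "I2 = V"
  proof
    show "I2 \<subseteq> V" unfolding I2_def LS
      by (rule lin_closed[OF V0 Vadd Vscale]) (auto simp: V_def supp_ebasis)
    show "V \<subseteq> I2"
    proof
      fix x assume x: "x \<in> V"
      have "x = (\<lambda>k. \<Sum>i\<in>supp x. x i * ebasis i k)"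
      proof
        fix k
        show "x k = (\<Sum>i\<in>supp x. x i * ebasis i k)"
        proof -
          have "(\<Sum>i\<in>supp x. x i * ebasis i k) = (\<Sum>i\<in>supp x. if i = k then x i else 0)"
            by (rule sum.cong) (auto simp: ebasis_def)
          also have "\<dots> = (if k \<in> supp x then x k else 0)"
            using x by (simp add: V_def)
          also have "\<dots> = x k" by (simp add: supp_def)
          finally show ?thesis by simp
        qed
      qed
      also have "\<dots> \<in> I2" unfolding I2_def LS using x
        by (intro lin_sum) (auto simp: V_def)
      finally show "x \<in> I2" .
    qed
  qed
  have VEA: "V \<subseteq> EA" by (auto simp: V_def EA_def)
  have prod: "emult w a x \<in> I1" if "a \<in> EA" "x \<in> V" for a x
  proof -
    have "emult w a x = (\<lambda>k. \<Sum>i\<in>supp a \<inter> supp x. (a i * x i) * esq w i k)"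
      using that by (simp add: emult_alt EA_def esq_eq)
    also have "\<dots> \<in> I1" unfolding I1_def LS using that
      by (intro lin_sum) (auto simp: V_def EA_def)
    finally show ?thesis .
  qed
  have prod': "emult w x a \<in> I1" if "a \<in> EA" "x \<in> V" for a x
    using prod[OF that] emult_comm that VEA by (metis EA_def mem_Collect_eq subsetD)
  have I1ideal: "is_ideal w I1"
    unfolding is_ideal_def using I1V VEA prod prod'
    by (auto simp: I1_def intro: lin_zero lin_add lin_scale)
  have I2ideal: "is_ideal w I2"
    unfolding is_ideal_def using I1V VEA prod prod' I2V
    by (auto simp: I2_def intro: lin_zero lin_add lin_scale)
  have I1J: "I1 \<subseteq> J" unfolding I1_def LS
    by (rule lin_closed) (use idJ esqJ in auto)
  have JI2: "J \<subseteq> I2" unfolding I2V V_def S_def supp_set_def using idJ(1)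
    by (auto simp: EA_def)
  have last: "I1 = J \<and> J = I2" if fu: "finite (UNIV::'i set)" and dn: "struct_det w \<noteq> 0"
  proof -
    have eb: "ebasis j \<in> I1" if jS: "j \<in> S" for j
    proof -
      obtain c where c: "ebasis j = (\<lambda>k. \<Sum>i\<in>S. c i * w k i)"
        using key[OF fu dn _ jS] clos by blast
      have "(\<lambda>k. \<Sum>i\<in>S. c i * esq w i k) \<in> I1" unfolding I1_def LS
        using fu by (intro lin_sum) (auto intro: finite_subset)
      then show ?thesis using c by (simp add: esq_eq)
    qed
    have "I2 \<subseteq> I1" unfolding I2_def LS
      by (rule lin_closed) (use eb in \<open>auto intro: lin_zero lin_add lin_scale simp: I1_def\<close>)
    then show ?thesis using I1J JI2 by auto
  qed
  show ?thesis using I1ideal I2ideal I1J JI2 last by blast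
qed

end
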